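(* Let PSSPM denote the set of all configurations reachable in the Parallel Symmetric Sand Pile Model from some initial configuration $(\underline{n})$, $n\in\mathbb N$, and SSPM the set of all configurations reachable in the Symmetric Sand Pile Model from some initial configuration $(\underline{n})$, $n \in \mathbb N$. Then PSSPM $\subsetneq$ SSPM.
   Context: A configuration is a sequence $(c_i)_{i\in\mathbb Z}$ of nonnegative integers with only finitely many positive values. For $n\in\mathbb N$, $(\underline{n})$ denotes the configuration with $c_0=n$ and $c_i=0$ for $i\neq 0$. Two local rules act on a column $i$: rule $\mathcal L$ at $i$ is applicable if $c_{i-1}+2\le c_i$ and moves one grain from column $i$ to column $i-1$ ($c_{i-1}\mapsto c_{i-1}+1$, $c_i\mapsto c_i-1$); rule $\mathcal R$ at $i$ is applicable if $c_i\ge c_{i+1}+2$ and moves one grain from column $i$ to column $i+1$. In SSPM, one transition consists of applying exactly once one applicable rule ($\mathcal L$ or $\mathcal R$) at one column. In PSSPM, one transition consists of applying rules simultaneously on every column where some rule is applicable, applying at most one of the two rules on each column (where both are applicable, one of them is chosen). A configuration is reachable in a model from $(\underline{n})$ if it is obtained from $(\underline{n})$ by a finite (possibly empty) sequence of transitions of that model. *)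

theory Defs
  imports Main
begin

type_synonym config = "int \<Rightarrow> nat"

definition is_config :: "config \<Rightarrow> bool" where
  "is_config c \<longleftrightarrow> finite {i. c i > 0}"

definition init :: "nat \<Rightarrow> config" where
  "init n = (\<lambda>i. if i = 0 then n else 0)"

definition L_applicable :: "config \<Rightarrow> int \<Rightarrow> bool" where
  "L_applicable c i \<longleftrightarrow> c (i - 1) + 2 \<le> c i"

definition R_applicable :: "config \<Rightarrow> int \<Rightarrow> bool" where
  "R_applicable c i \<longleftrightarrow> c (i + 1) + 2 \<le> c i"

definition apply_L :: "config \<Rightarrow> int \<Rightarrow> config" where
  "apply_L c i = (c(i - 1 := c (i - 1) + 1))(i := c i - 1)"

definition apply_R :: "config \<Rightarrow> int \<Rightarrow> config" where
  "apply_R c i = (c(i + 1 := c (i + 1) + 1))(i := c i - 1)"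

definition sspm_step :: "config \<Rightarrow> config \<Rightarrow> bool" where
  "sspm_step c c' \<longleftrightarrow>
     (\<exists>i. (L_applicable c i \<and> c' = apply_L c i) \<or> (R_applicable c i \<and> c' = apply_R c i))"

datatype action = NoRule | RuleL | RuleR

definition valid_choice :: "config \<Rightarrow> (int \<Rightarrow> action) \<Rightarrow> bool" where
  "valid_choice c a \<longleftrightarrow>
     (\<forall>i. (a i = RuleL \<longrightarrow> L_applicable c i)
        \<and> (a i = RuleR \<longrightarrow> R_applicable c i)
        \<and> (a i = NoRule \<longleftrightarrow> \<not> L_applicable c i \<and> \<not> R_applicable c i))"

definition apply_parallel :: "config \<Rightarrow> (int \<Rightarrow> action) \<Rightarrow> config" where
  "apply_parallel c a = (\<lambda>i. c i - (if a i = NoRule then 0 else 1)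
        + (if a (i + 1) = RuleL then 1 else 0) + (if a (i - 1) = RuleR then 1 else 0))"

definition psspm_step :: "config \<Rightarrow> config \<Rightarrow> bool" where
  "psspm_step c c' \<longleftrightarrow> (\<exists>a. valid_choice c a \<and> c' = apply_parallel c a)"

definition SSPM :: "config set" where
  "SSPM = {c. \<exists>n. sspm_step\<^sup>*\<^sup>* (init n) c}"

definition PSSPM :: "config set" where
  "PSSPM = {c. \<exists>n. psspm_step\<^sup>*\<^sup>* (init n) c}"

end

theory Submission imports Defs begin
definition unimodal :: "config \<Rightarrow> bool" where
  "unimodal c \<longleftrightarrow> (\<exists>m. (\<forall>x<m. c x \<le> c (x+1)) \<and> (\<forall>x\<ge>m. c (x+1) \<le> c x))"

lemma ap_N: "apply_parallel c (\<lambda>_. NoRule) = c"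
  by (simp add: apply_parallel_def)

lemma sim_aux:
  "card {i. a i \<noteq> NoRule} = n \<Longrightarrow> finite {i. a i \<noteq> NoRule} \<Longrightarrow>
   (\<forall>i. a i = RuleL \<longrightarrow> L_applicable c i) \<Longrightarrow> (\<forall>i. a i = RuleR \<longrightarrow> R_applicable c i) \<Longrightarrow>
   (\<forall>i. \<not>(a i = RuleR \<and> a (i+2) = RuleL)) \<Longrightarrow> sspm_step\<^sup>*\<^sup>* c (apply_parallel c a)"
proof (induction n arbitrary: a c)
  case 0
  then have "a = (\<lambda>_. NoRule)" by auto
  then show ?case by (simp add: ap_N)
next
  case (Suc n)
  then obtain j where j: "a j \<noteq> NoRule" by (metis (mono_tags, lifting) card.empty empty_Collect_eq nat.distinct(1))
  have ge2: "\<forall>i. a i \<noteq> NoRule \<longrightarrow> 2 \<le> c i"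
    using Suc.prems(3,4) unfolding L_applicable_def R_applicable_def by (metis action.exhaust le_add2 le_trans)
  let ?a1 = "a(j := NoRule)"
  have fin1: "finite {i. ?a1 i \<noteq> NoRule}" using Suc.prems(2) by (rule rev_finite_subset) auto
  have "{i. ?a1 i \<noteq> NoRule} = {i. a i \<noteq> NoRule} - {j}" by auto
  then have card1: "card {i. ?a1 i \<noteq> NoRule} = n" using Suc.prems(1,2) j by simp
  have pat1: "\<forall>i. \<not>(?a1 i = RuleR \<and> ?a1 (i+2) = RuleL)" using Suc.prems(5) by auto
  show ?case
  proof (cases "a j")
    case NoRule then show ?thesis using j by simp
  next
    case RuleL
    let ?c1 = "apply_L c j"
    have st: "sspm_step c ?c1" unfolding sspm_step_def using RuleL Suc.prems(3) by blast
    have cj: "2 \<le> c j" using ge2 j by auto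
    have nR: "a (j-2) \<noteq> RuleR" using Suc.prems(5) RuleL by (metis diff_add_cancel)
    have L1: "\<forall>i. ?a1 i = RuleL \<longrightarrow> L_applicable ?c1 i"
      using Suc.prems(3) cj by (auto simp: L_applicable_def apply_L_def)
    have R1: "\<forall>i. ?a1 i = RuleR \<longrightarrow> R_applicable ?c1 i"
    proof (intro allI impI)
      fix i assume h: "?a1 i = RuleR"
      then have "i \<noteq> j" "R_applicable c i" using Suc.prems(4) by (auto split: if_splits)
      moreover have "i \<noteq> j - 2" using h nR by auto
      ultimately show "R_applicable ?c1 i" using cj
        by (auto simp: R_applicable_def apply_L_def)
    qed
    have eq: "apply_parallel ?c1 ?a1 = apply_parallel c a"
    proof
      fix i
      show "apply_parallel ?c1 ?a1 i = apply_parallel c a i"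
        using cj ge2[rule_format, of "j-1"] RuleL
        by (auto simp: apply_parallel_def apply_L_def)
    qed
    have "sspm_step\<^sup>*\<^sup>* ?c1 (apply_parallel ?c1 ?a1)"
      using Suc.IH[OF card1 fin1 L1 R1 pat1] .
    then show ?thesis using st eq by (metis converse_rtranclp_into_rtranclp)
  next
    case RuleR
    let ?c1 = "apply_R c j"
    have st: "sspm_step c ?c1" unfolding sspm_step_def using RuleR Suc.prems(4) by blast
    have cj: "2 \<le> c j" using ge2 j by auto
    have nL: "a (j+2) \<noteq> RuleL" using Suc.prems(5) RuleR by metis
    have R1: "\<forall>i. ?a1 i = RuleR \<longrightarrow> R_applicable ?c1 i"
      using Suc.prems(4) cj by (auto simp: R_applicable_def apply_R_def)
    have L1: "\<forall>i. ?a1 i = RuleL \<longrightarrow> L_applicable ?c1 i"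
    proof (intro allI impI)
      fix i assume h: "?a1 i = RuleL"
      then have "i \<noteq> j" "L_applicable c i" using Suc.prems(3) by (auto split: if_splits)
      moreover have "i \<noteq> j + 2" using h nL by auto
      ultimately show "L_applicable ?c1 i" using cj
        by (auto simp: L_applicable_def apply_R_def)
    qed
    have eq: "apply_parallel ?c1 ?a1 = apply_parallel c a"
    proof
      fix i
      show "apply_parallel ?c1 ?a1 i = apply_parallel c a i"
        using cj ge2[rule_format, of "j+1"] RuleR
        by (auto simp: apply_parallel_def apply_R_def)
    qed
    have "sspm_step\<^sup>*\<^sup>* ?c1 (apply_parallel ?c1 ?a1)"
      using Suc.IH[OF card1 fin1 L1 R1 pat1] .
    then show ?thesis using st eq by (metis converse_rtranclp_into_rtranclp)
  qed
qed


lemma vc: "valid_choice c a \<Longrightarrow> (a i = RuleL \<longrightarrow> L_applicable c i) \<and> (a i = RuleR \<longrightarrow> R_applicable c i)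
  \<and> (a i = NoRule \<longleftrightarrow> \<not> L_applicable c i \<and> \<not> R_applicable c i)"
  unfolding valid_choice_def by blast

lemma psspm_sim:
  assumes "is_config c" "unimodal c" "valid_choice c a"
  shows "sspm_step\<^sup>*\<^sup>* c (apply_parallel c a)"
proof -
  obtain m where m1: "\<forall>x<m. c x \<le> c (x+1)" and m2: "\<forall>x\<ge>m. c (x+1) \<le> c x"
    using assms(2) unfolding unimodal_def by blast
  have sub: "{i. a i \<noteq> NoRule} \<subseteq> {i. c i > 0}"
  proof
    fix i assume "i \<in> {i. a i \<noteq> NoRule}"
    then have "L_applicable c i \<or> R_applicable c i" using vc[OF assms(3), of i] by auto
    then show "i \<in> {i. c i > 0}" by (auto simp: L_applicable_def R_applicable_def)
  qed
  have fin: "finite {i. a i \<noteq> NoRule}"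
    using assms(1) sub unfolding is_config_def by (blast intro: rev_finite_subset)
  have pat: "\<forall>i. \<not>(a i = RuleR \<and> a (i+2) = RuleL)"
  proof (intro allI notI)
    fix i assume h: "a i = RuleR \<and> a (i+2) = RuleL"
    then have r: "R_applicable c i" and l: "L_applicable c (i+2)" using vc[OF assms(3)] by blast+
    have "m \<le> i"
    proof (rule ccontr)
      assume "\<not> m \<le> i" then have "c i \<le> c (i+1)" using m1 by auto
      then show False using r by (auto simp: R_applicable_def)
    qed
    moreover have "i + 2 \<le> m"
    proof (rule ccontr)
      assume "\<not> i + 2 \<le> m" then have "c (i+1+1) \<le> c (i+1)" using m2[rule_format, of "i+1"] by (simp add: add.assoc)
      moreover have e: "i + 2 - 1 = i + 1" by simp
      ultimately show False using l unfolding L_applicable_def e by (simp add: add.assoc)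
    qed
    ultimately show False by simp
  qed
  show ?thesis
    using sim_aux[OF refl fin _ _ pat] vc[OF assms(3)] by blast
qed

lemma psspm_unimodal:
  assumes "unimodal c" "valid_choice c a"
  shows "unimodal (apply_parallel c a)"
proof -
  obtain m where m1: "\<forall>x<m. c x \<le> c (x+1)" and m2: "\<forall>x\<ge>m. c (x+1) \<le> c x"
    using assms(1) unfolding unimodal_def by blast
  let ?d = "apply_parallel c a"
  have nR: "a x \<noteq> RuleR" if "x < m" for x
    using m1 that vc[OF assms(2), of x] by (force simp: R_applicable_def)
  have nL: "a x \<noteq> RuleL" if "x > m" for x
    using m2[rule_format, of "x-1"] that vc[OF assms(2), of x] by (force simp: L_applicable_def)
  have V: "\<And>x. (a x = RuleL \<longrightarrow> c (x-1) + 2 \<le> c x) \<and> (a x = RuleR \<longrightarrow> c (x+1) + 2 \<le> c x)"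
    using vc[OF assms(2)] by (auto simp: L_applicable_def R_applicable_def)
  have F1: "?d x \<le> ?d (x+1)" if "x + 1 < m" for x
  proof -
    have "a (x-1) \<noteq> RuleR" "a x \<noteq> RuleR" "a (x+1) \<noteq> RuleR" using nR that by auto
    moreover have "c x \<le> c (x+1)" using m1 that by auto
    moreover note V[of x] V[of "x+1"]
    ultimately show ?thesis unfolding apply_parallel_def
      by (cases "a x"; cases "a (x+1)"; cases "a (x+2)") (auto simp: algebra_simps)
  qed
  have F2: "?d (x+1) \<le> ?d x" if "x > m" for x
  proof -
    have "a (x+2) \<noteq> RuleL" "a x \<noteq> RuleL" "a (x+1) \<noteq> RuleL" using nL that by auto
    moreover have "c (x+1) \<le> c x" using m2 that by auto
    moreover note V[of x] V[of "x+1"]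
    ultimately show ?thesis unfolding apply_parallel_def
      by (cases "a x"; cases "a (x+1)"; cases "a (x - 1)") (auto simp: algebra_simps)
  qed
  have F3: "\<not> (?d (m-1) > ?d m \<and> ?d (m+1) > ?d m)"
  proof -
    have "a (m-1) \<noteq> RuleR" "a (m-2) \<noteq> RuleR" "a (m+1) \<noteq> RuleL" "a (m+2) \<noteq> RuleL"
      using nR nL by auto
    moreover have "c (m-1) \<le> c m" using m1[rule_format, of "m-1"] by auto
    moreover have "c (m+1) \<le> c m" using m2 by auto
    moreover note V[of m] V[of "m-1"] V[of "m+1"]
    ultimately show ?thesis unfolding apply_parallel_def
      by (cases "a m"; cases "a (m-1)"; cases "a (m+1)") (auto simp: algebra_simps)
  qed
  show ?thesis
  proof (cases "?d (m+1) > ?d m")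
    case True
    then have l: "?d (m-1) \<le> ?d m" using F3 by auto
    show ?thesis unfolding unimodal_def
    proof (intro exI[of _ "m+1"] conjI allI impI)
      fix x assume "x < m + 1"
      then consider "x + 1 < m" | "x = m - 1" | "x = m" by linarith
      then show "?d x \<le> ?d (x+1)" using F1 l True by cases auto
    next
      fix x assume "x \<ge> m + 1" then show "?d (x+1) \<le> ?d x" using F2 by auto
    qed
  next
    case False
    show ?thesis
    proof (cases "?d (m-1) > ?d m")
      case True
      show ?thesis unfolding unimodal_def
      proof (intro exI[of _ "m-1"] conjI allI impI)
        fix x assume "x < m - 1"
        then show "?d x \<le> ?d (x+1)" using F1 by auto
      next
        fix x assume "x \<ge> m - 1"
        then consider "x > m" | "x = m - 1" | "x = m" by linarith
        then show "?d (x+1) \<le> ?d x" using F2 False True by cases auto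
      qed
    next
      case F: False
      show ?thesis unfolding unimodal_def
      proof (intro exI[of _ "m"] conjI allI impI)
        fix x assume "x < m"
        then consider "x + 1 < m" | "x = m - 1" by linarith
        then show "?d x \<le> ?d (x+1)" using F1 F by cases auto
      next
        fix x assume "x \<ge> m"
        then consider "x > m" | "x = m" by linarith
        then show "?d (x+1) \<le> ?d x" using F2 False by cases auto
      qed
    qed
  qed
qed

lemma psspm_config:
  assumes "is_config c" "valid_choice c a"
  shows "is_config (apply_parallel c a)"
proof -
  let ?S = "{i. c i > 0}"
  have "{i. apply_parallel c a i > 0} \<subseteq> ?S \<union> (\<lambda>x. x - 1) ` ?S \<union> (\<lambda>x. x + 1) ` ?S"
  proof
    fix i assume "i \<in> {i. apply_parallel c a i > 0}"
    then have "c i > 0 \<or> a (i+1) = RuleL \<or> a (i-1) = RuleR"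
      by (auto simp: apply_parallel_def split: if_splits)
    moreover have "a (i+1) = RuleL \<Longrightarrow> c (i+1) > 0"
      using vc[OF assms(2), of "i+1"] by (auto simp: L_applicable_def)
    moreover have "a (i-1) = RuleR \<Longrightarrow> c (i-1) > 0"
      using vc[OF assms(2), of "i-1"] by (auto simp: R_applicable_def)
    ultimately show "i \<in> ?S \<union> (\<lambda>x. x - 1) ` ?S \<union> (\<lambda>x. x + 1) ` ?S"
      by (auto intro: image_eqI[of i _ "i+1"] image_eqI[of i _ "i-1"])
  qed
  moreover have "finite ?S" using assms(1) unfolding is_config_def .
  ultimately show ?thesis unfolding is_config_def by (meson finite_Un finite_imageI rev_finite_subset)
qed

lemma init_ok: "is_config (init n) \<and> unimodal (init n)"
  unfolding is_config_def unimodal_def init_def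
  by (auto intro!: exI[of _ 0] rev_finite_subset[of "{0}"])

lemma psspm_reach:
  "psspm_step\<^sup>*\<^sup>* (init n) c \<Longrightarrow> is_config c \<and> unimodal c \<and> sspm_step\<^sup>*\<^sup>* (init n) c"
proof (induction rule: rtranclp_induct)
  case base then show ?case using init_ok by simp
next
  case (step y z)
  then obtain a where a: "valid_choice y a" "z = apply_parallel y a" unfolding psspm_step_def by blast
  then show ?case using step psspm_sim psspm_unimodal psspm_config
    by (meson rtranclp_trans)
qed

lemma PSSPM_sub: "PSSPM \<subseteq> SSPM"
  unfolding PSSPM_def SSPM_def using psspm_reach by blast

definition inv_sum :: "nat \<Rightarrow> config \<Rightarrow> bool" where
  "inv_sum n c \<longleftrightarrow> (\<exists>k::int. (\<forall>i. k < \<bar>i\<bar> \<longrightarrow> c i = 0) \<and> (\<forall>K\<ge>k. sum c {-K..K} = n))"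

lemma sum_move:
  fixes c :: config
  assumes "finite A" "j \<in> A" "j' \<in> A" "j \<noteq> j'" "1 \<le> c j"
  shows "sum ((c(j' := c j' + 1))(j := c j - 1)) A = sum c A"
proof -
  let ?g = "(c(j' := c j' + 1))(j := c j - 1)"
  have "sum ?g A = ?g j + sum ?g (A - {j})" by (rule sum.remove) (use assms in auto)
  also have "sum ?g (A - {j}) = ?g j' + sum ?g (A - {j} - {j'})" by (rule sum.remove) (use assms in auto)
  also have "sum ?g (A - {j} - {j'}) = sum c (A - {j} - {j'})" by (rule sum.cong) auto
  finally have 1: "sum ?g A = ?g j + (?g j' + sum c (A - {j} - {j'}))" .
  have gj: "?g j = c j - 1" by simp
  have gj': "?g j' = c j' + 1" using assms by simp
  have 2: "sum c A = c j + (c j' + sum c (A - {j} - {j'}))" using assms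
    by (metis (no_types, lifting) Diff_iff finite_Diff singletonD sum.remove)
  show ?thesis unfolding 1 gj gj' 2 using assms(5) by arith
qed

lemma sspm_sum: "sspm_step\<^sup>*\<^sup>* (init n) c \<Longrightarrow> inv_sum n c"
proof (induction rule: rtranclp_induct)
  case base
  show ?case unfolding inv_sum_def
  proof (intro exI[of _ 0] conjI allI impI)
    fix i :: int assume "0 < \<bar>i\<bar>" then show "init n i = 0" by (simp add: init_def)
  next
    fix K :: int assume "K \<ge> 0"
    then have "sum (init n) {-K..K} = sum (init n) {0}"
      by (intro sum.mono_neutral_right) (auto simp: init_def)
    then show "sum (init n) {-K..K} = n" by (simp add: init_def)
  qed
next
  case (step y z)
  then obtain k where k1: "\<forall>i. k < \<bar>i\<bar> \<longrightarrow> y i = 0" and k2: "\<forall>K\<ge>k. sum y {-K..K} = n"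
    unfolding inv_sum_def by blast
  from step(2) obtain j where j: "(L_applicable y j \<and> z = apply_L y j) \<or> (R_applicable y j \<and> z = apply_R y j)"
    unfolding sspm_step_def by blast
  have yj: "2 \<le> y j" using j by (auto simp: L_applicable_def R_applicable_def)
  then have jk: "\<bar>j\<bar> \<le> k" using k1 by (cases "k < \<bar>j\<bar>") auto
  show ?case unfolding inv_sum_def
  proof (intro exI[of _ "k+1"] conjI allI impI)
    fix i :: int assume "k + 1 < \<bar>i\<bar>"
    then show "z i = 0" using j k1 jk by (auto simp: apply_L_def apply_R_def)
  next
    fix K assume K: "K \<ge> k + 1"
    have "sum z {-K..K} = sum y {-K..K}"
      using j
    proof
      assume "L_applicable y j \<and> z = apply_L y j"
      then show ?thesis unfolding apply_L_def using sum_move[of "{-K..K}" j "j-1" y] yj jk K by auto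
    next
      assume "R_applicable y j \<and> z = apply_R y j"
      then show ?thesis unfolding apply_R_def using sum_move[of "{-K..K}" j "j+1" y] yj jk K by auto
    qed
    then show "sum z {-K..K} = n" using k2 K by simp
  qed
qed


lemma vcN: "valid_choice c a \<Longrightarrow> \<not> L_applicable c i \<Longrightarrow> \<not> R_applicable c i \<Longrightarrow> a i = NoRule"
  unfolding valid_choice_def by blast
lemma vcL: "valid_choice c a \<Longrightarrow> L_applicable c i \<Longrightarrow> \<not> R_applicable c i \<Longrightarrow> a i = RuleL"
  unfolding valid_choice_def by (metis action.exhaust)
lemma vcR: "valid_choice c a \<Longrightarrow> \<not> L_applicable c i \<Longrightarrow> R_applicable c i \<Longrightarrow> a i = RuleR"
  unfolding valid_choice_def by (metis action.exhaust)
lemma vcLR: "valid_choice c a \<Longrightarrow> L_applicable c i \<Longrightarrow> a i = RuleL \<or> a i = RuleR"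
  unfolding valid_choice_def by (metis action.exhaust)

lemma stable:
  assumes "\<And>i. \<not> L_applicable c i" "\<And>i. \<not> R_applicable c i" "psspm_step c d"
  shows "d = c"
proof -
  obtain a where va: "valid_choice c a" and d: "d = apply_parallel c a"
    using assms(3) unfolding psspm_step_def by blast
  have "\<And>i. a i = NoRule" using vcN[OF va] assms(1,2) by blast
  then show ?thesis unfolding d apply_parallel_def by simp
qed

definition "cA = (\<lambda>i::int. if i = -1 then 1 else if i = 0 then 3 else (0::nat))"
definition "cB = (\<lambda>i::int. if i = 0 then 3 else if i = 1 then 1 else (0::nat))"
definition "cC = (\<lambda>i::int. if i = -1 then 2 else if i = 0 then 2 else (0::nat))"
definition "cD = (\<lambda>i::int. if i = 0 then 2 else if i = 1 then 2 else (0::nat))"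
definition "cE = (\<lambda>i::int. if i = -1 then 1 else if i = 0 then 2 else if i = 1 then 1 else (0::nat))"
definition "cF = (\<lambda>i::int. if -2 \<le> i \<and> i \<le> 1 then 1 else (0::nat))"
definition "cG = (\<lambda>i::int. if -1 \<le> i \<and> i \<le> 2 then 1 else (0::nat))"
definition "cT = (\<lambda>i::int. if i = -2 then 1 else if i = -1 then 1 else if i = 0 then 2 else (0::nat))"

lemmas cdefs = cA_def cB_def cC_def cD_def cE_def cF_def cG_def cT_def init_def
lemmas rdefs = L_applicable_def R_applicable_def

lemma stI: assumes "psspm_step (init 4) d" shows "d = cA \<or> d = cB"
proof -
  obtain a where va: "valid_choice (init 4) a" and d: "d = apply_parallel (init 4) a"
    using assms unfolding psspm_step_def by blast
  have N: "\<And>i. i \<noteq> 0 \<Longrightarrow> a i = NoRule" by (rule vcN[OF va]) (auto simp: cdefs rdefs)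
  have "a 0 = RuleL \<or> a 0 = RuleR" by (rule vcLR[OF va]) (auto simp: cdefs rdefs)
  then show ?thesis
  proof
    assume h: "a 0 = RuleL"
    have "d = cA" unfolding d
    proof
      fix i show "apply_parallel (init 4) a i = cA i" using N h
        by (cases "i = 0"; cases "i = 1"; cases "i = -1") (auto simp: apply_parallel_def cdefs)
    qed
    then show ?thesis by simp
  next
    assume h: "a 0 = RuleR"
    have "d = cB" unfolding d
    proof
      fix i show "apply_parallel (init 4) a i = cB i" using N h
        by (cases "i = 0"; cases "i = 1"; cases "i = -1") (auto simp: apply_parallel_def cdefs)
    qed
    then show ?thesis by simp
  qed
qed


lemma stA: assumes "psspm_step cA d" shows "d = cC \<or> d = cE"
proof -
  obtain a where va: "valid_choice cA a" and d: "d = apply_parallel cA a"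
    using assms unfolding psspm_step_def by blast
  have N: "\<And>i. i \<noteq> 0 \<Longrightarrow> a i = NoRule" by (rule vcN[OF va]) (auto simp: cdefs rdefs)
  have "a 0 = RuleL \<or> a 0 = RuleR" by (rule vcLR[OF va]) (auto simp: cdefs rdefs)
  then show ?thesis
  proof
    assume h: "a 0 = RuleL"
    have "d = cC" unfolding d
    proof
      fix i show "apply_parallel cA a i = cC i" using N h
        by (cases "i = 0"; cases "i = 1"; cases "i = -1") (auto simp: apply_parallel_def cdefs)
    qed
    then show ?thesis by simp
  next
    assume h: "a 0 = RuleR"
    have "d = cE" unfolding d
    proof
      fix i show "apply_parallel cA a i = cE i" using N h
        by (cases "i = 0"; cases "i = 1"; cases "i = -1") (auto simp: apply_parallel_def cdefs)
    qed
    then show ?thesis by simp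
  qed
qed

lemma stB: assumes "psspm_step cB d" shows "d = cE \<or> d = cD"
proof -
  obtain a where va: "valid_choice cB a" and d: "d = apply_parallel cB a"
    using assms unfolding psspm_step_def by blast
  have N: "\<And>i. i \<noteq> 0 \<Longrightarrow> a i = NoRule" by (rule vcN[OF va]) (auto simp: cdefs rdefs)
  have "a 0 = RuleL \<or> a 0 = RuleR" by (rule vcLR[OF va]) (auto simp: cdefs rdefs)
  then show ?thesis
  proof
    assume h: "a 0 = RuleL"
    have "d = cE" unfolding d
    proof
      fix i show "apply_parallel cB a i = cE i" using N h
        by (cases "i = 0"; cases "i = 1"; cases "i = -1") (auto simp: apply_parallel_def cdefs)
    qed
    then show ?thesis by simp
  next
    assume h: "a 0 = RuleR"
    have "d = cD" unfolding d
    proof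
      fix i show "apply_parallel cB a i = cD i" using N h
        by (cases "i = 0"; cases "i = 1"; cases "i = -1") (auto simp: apply_parallel_def cdefs)
    qed
    then show ?thesis by simp
  qed
qed

lemma stC: assumes "psspm_step cC d" shows "d = cF"
proof -
  obtain a where va: "valid_choice cC a" and d: "d = apply_parallel cC a"
    using assms unfolding psspm_step_def by blast
  have N: "\<And>i. i \<noteq> 0 \<Longrightarrow> i \<noteq> -1 \<Longrightarrow> a i = NoRule" by (rule vcN[OF va]) (auto simp: cdefs rdefs)
  have h1: "a (-1) = RuleL" by (rule vcL[OF va]) (auto simp: cdefs rdefs)
  have h2: "a 0 = RuleR" by (rule vcR[OF va]) (auto simp: cdefs rdefs)
  show ?thesis unfolding d
  proof
    fix i show "apply_parallel cC a i = cF i" using N h1 h2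
      by (cases "i = 0"; cases "i = 1"; cases "i = -1"; cases "i = -2") (auto simp: apply_parallel_def cdefs)
  qed
qed

lemma stD: assumes "psspm_step cD d" shows "d = cG"
proof -
  obtain a where va: "valid_choice cD a" and d: "d = apply_parallel cD a"
    using assms unfolding psspm_step_def by blast
  have N: "\<And>i. i \<noteq> 0 \<Longrightarrow> i \<noteq> 1 \<Longrightarrow> a i = NoRule" by (rule vcN[OF va]) (auto simp: cdefs rdefs)
  have h1: "a 0 = RuleL" by (rule vcL[OF va]) (auto simp: cdefs rdefs)
  have h2: "a 1 = RuleR" by (rule vcR[OF va]) (auto simp: cdefs rdefs)
  show ?thesis unfolding d
  proof
    fix i show "apply_parallel cD a i = cG i" using N h1 h2
      by (cases "i = 0"; cases "i = 1"; cases "i = -1"; cases "i = 2") (auto simp: apply_parallel_def cdefs)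
  qed
qed

lemma stE: "psspm_step cE d \<Longrightarrow> d = cE"
  by (rule stable) (auto simp: cdefs rdefs)
lemma stF: "psspm_step cF d \<Longrightarrow> d = cF"
  by (rule stable) (auto simp: cdefs rdefs)
lemma stG: "psspm_step cG d \<Longrightarrow> d = cG"
  by (rule stable) (auto simp: cdefs rdefs)

lemma reach4: "psspm_step\<^sup>*\<^sup>* (init 4) c \<Longrightarrow> c \<in> {init 4, cA, cB, cC, cD, cE, cF, cG}"
proof (induction rule: rtranclp_induct)
  case base then show ?case by simp
next
  case (step y z)
  then show ?case using stI stA stB stC stD stE stF stG by blast
qed

lemma cT_not: "cT \<notin> {init 4, cA, cB, cC, cD, cE, cF, cG}"
proof -
  have "\<And>c. c \<in> {init 4, cA, cB, cC, cD, cE, cG} \<Longrightarrow> c (-2) = 0" by (auto simp: cdefs)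
  moreover have "cT (-2) = 1" "cT 0 = 2" "cF 0 = 1" by (auto simp: cdefs)
  ultimately show ?thesis by (metis insert_iff one_neq_zero numeral_One num.distinct(1) numeral_eq_iff)
qed

lemma cT_SSPM: "sspm_step\<^sup>*\<^sup>* (init 4) cT"
proof -
  have 1: "sspm_step (init 4) cA" unfolding sspm_step_def
    by (rule exI[of _ 0], rule disjI1) (auto simp: cdefs rdefs apply_L_def)
  have 2: "sspm_step cA cC" unfolding sspm_step_def
    by (rule exI[of _ 0], rule disjI1) (auto simp: cdefs rdefs apply_L_def)
  have 3: "sspm_step cC cT" unfolding sspm_step_def
    by (rule exI[of _ "-1"], rule disjI1) (auto simp: cdefs rdefs apply_L_def)
  show ?thesis using 1 2 3 by simp
qed

lemma cT_sum: "inv_sum n cT \<Longrightarrow> n = 4"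
proof -
  assume "inv_sum n cT"
  then obtain k where k: "\<forall>K\<ge>k. sum cT {-K..K} = n" unfolding inv_sum_def by blast
  define K where "K = max k 2"
  have "sum cT {-K..K} = n" using k K_def by simp
  moreover have "sum cT {-K..K} = sum cT {-2..0}"
    by (rule sum.mono_neutral_right) (auto simp: K_def cT_def)
  moreover have "{-2..0::int} = {-2,-1,0}" by auto
  ultimately show "n = 4" by (simp add: cT_def)
qed

theorem proposition1:
  shows "PSSPM \<subset> SSPM"
proof -
  have "cT \<in> SSPM" using cT_SSPM unfolding SSPM_def by blast
  moreover have "cT \<notin> PSSPM"
  proof
    assume "cT \<in> PSSPM"
    then obtain n where r: "psspm_step\<^sup>*\<^sup>* (init n) cT" unfolding PSSPM_def by blast
    then have "n = 4" using psspm_reach sspm_sum cT_sum by blast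
    then show False using r reach4 cT_not by blast
  qed
  ultimately show ?thesis using PSSPM_sub by blast
qed

end
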